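(* Assume $\mathbb{E} Z<\infty$. Let $L_\infty=\inf_{n\in\mathbb{N}} L_n$. Then $L_\infty$ is finite almost surely. Consequently, the sequences $(R_n)_{n\ge1}$, $(L_n)_{n\ge1}$ and $(\Lambda_n)_{n\ge1}$ are almost surely bounded.
   Context: Let $Z,W,(Z_n)_{n\ge1},(W_n)_{n\ge1}$ be independent, identically distributed random variables taking values in $\mathbb{N}=\{1,2,3,\dots\}$. Define sets $T_n\subset\mathbb{Z}$ recursively by $T_n=\{n\}$ for $n\le 0$ and $T_n=\{n\}\cup T_{n-Z_n}\cup T_{n-W_n}$ for $n\ge1$ (the set of vertices reachable from $n$ in the directed graph on $\mathbb{Z}$ with edges $n\to n-Z_n$ and $n\to n-W_n$ for $n\ge1$). Let $\mathcal{L}_n=T_n\cap\{0,-1,-2,\dots\}$ (the leaves reached from $n$), $R_n=\max\mathcal{L}_n$, $L_n=\min\mathcal{L}_n$, and $\Lambda_n=|\mathcal{L}_n|$. *)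

theory Defs
  imports "HOL-Probability.Probability"
begin

text \<open>Given the realisations z n = Z_n, w n = W_n (n \<ge> 1),
  reach z w n m holds iff m is reachable from n in the directed graph on the integers
  with edges m \<rightarrow> m - z m and m \<rightarrow> m - w m for m \<ge> 1. Thus T_n = {m. reach z w n m}.\<close>

inductive reach :: "(nat \<Rightarrow> nat) \<Rightarrow> (nat \<Rightarrow> nat) \<Rightarrow> int \<Rightarrow> int \<Rightarrow> bool"
  for z w :: "nat \<Rightarrow> nat" and n :: int where
  refl: "reach z w n n"
| stepZ: "reach z w n m \<Longrightarrow> m \<ge> 1 \<Longrightarrow> reach z w n (m - int (z (nat m)))"
| stepW: "reach z w n m \<Longrightarrow> m \<ge> 1 \<Longrightarrow> reach z w n (m - int (w (nat m)))"

definition Tset :: "(nat \<Rightarrow> nat) \<Rightarrow> (nat \<Rightarrow> nat) \<Rightarrow> int \<Rightarrow> int set" where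
  "Tset z w n = {m. reach z w n m}"

definition leaves :: "(nat \<Rightarrow> nat) \<Rightarrow> (nat \<Rightarrow> nat) \<Rightarrow> int \<Rightarrow> int set" where
  "leaves z w n = Tset z w n \<inter> {..0}"

definition Rn :: "(nat \<Rightarrow> nat) \<Rightarrow> (nat \<Rightarrow> nat) \<Rightarrow> int \<Rightarrow> int" where
  "Rn z w n = Max (leaves z w n)"

definition Ln :: "(nat \<Rightarrow> nat) \<Rightarrow> (nat \<Rightarrow> nat) \<Rightarrow> int \<Rightarrow> int" where
  "Ln z w n = Min (leaves z w n)"

definition Lambdan :: "(nat \<Rightarrow> nat) \<Rightarrow> (nat \<Rightarrow> nat) \<Rightarrow> int \<Rightarrow> nat" where
  "Lambdan z w n = card (leaves z w n)"

definition family :: "('a \<Rightarrow> nat) \<Rightarrow> ('a \<Rightarrow> nat) \<Rightarrow> (nat \<Rightarrow> 'a \<Rightarrow> nat) \<Rightarrow> (nat \<Rightarrow> 'a \<Rightarrow> nat)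
    \<Rightarrow> bool \<times> nat \<Rightarrow> 'a \<Rightarrow> nat" where
  "family Z W Zs Ws i = (case i of (b, k) \<Rightarrow>
     if k = 0 then (if b then Z else W) else (if b then Zs k else Ws k))"

end

theory Submission
  imports Defs
begin

lemma reach_lower:
  assumes "reach z w n x" "B \<le> n"
    and hz: "\<And>m. m \<ge> 1 \<Longrightarrow> B \<le> int m - int (z m)"
    and hw: "\<And>m. m \<ge> 1 \<Longrightarrow> B \<le> int m - int (w m)"
  shows "B \<le> x"
  using assms(1)
proof induction
  case refl then show ?case using assms(2) by simp
next
  case (stepZ m)
  then have "int (nat m) = m" "nat m \<ge> 1" by auto
  then show ?case using hz[of "nat m"] by simp
next
  case (stepW m)
  then have "int (nat m) = m" "nat m \<ge> 1" by auto
  then show ?case using hw[of "nat m"] by simp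
qed

lemma leaves_sub:
  assumes "B \<le> 0" "n \<ge> 1"
    and hz: "\<And>m. m \<ge> 1 \<Longrightarrow> B \<le> int m - int (z m)"
    and hw: "\<And>m. m \<ge> 1 \<Longrightarrow> B \<le> int m - int (w m)"
  shows "leaves z w n \<subseteq> {B..0}"
proof
  fix x assume "x \<in> leaves z w n"
  then have "reach z w n x" "x \<le> 0" by (auto simp: leaves_def Tset_def)
  moreover have "B \<le> x" using reach_lower[OF \<open>reach z w n x\<close> _ hz hw] assms by simp
  ultimately show "x \<in> {B..0}" by simp
qed

lemma det_bounds:
  assumes "B \<le> 0"
    and hz: "\<And>m. m \<ge> 1 \<Longrightarrow> B \<le> int m - int (z m)"
    and hw: "\<And>m. m \<ge> 1 \<Longrightarrow> B \<le> int m - int (w m)"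
  shows "(INF n\<in>{1::int..}. ereal (real_of_int (Ln z w n))) \<noteq> -\<infinity>
       \<and> bdd_above ((\<lambda>n. Rn z w n) ` {1..})
       \<and> bdd_below ((\<lambda>n. Rn z w n) ` {1..})
       \<and> bdd_above ((\<lambda>n. Ln z w n) ` {1..})
       \<and> bdd_below ((\<lambda>n. Ln z w n) ` {1..})
       \<and> bdd_above ((\<lambda>n. Lambdan z w n) ` {1..})"
proof -
  have sub: "leaves z w n \<subseteq> {B..0}" if "n \<ge> 1" for n
    using leaves_sub[OF assms(1) that hz hw] .
  have R: "min B (Max {}) \<le> Rn z w n \<and> Rn z w n \<le> max 0 (Max {})" if "n \<ge> 1" for n
  proof (cases "leaves z w n = {}")
    case True then show ?thesis by (simp add: Rn_def)
  next
    case False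
    have f: "finite (leaves z w n)" using sub[OF that] finite_subset by blast
    have "Rn z w n \<in> leaves z w n" unfolding Rn_def using Max_in[OF f False] .
    then have "B \<le> Rn z w n \<and> Rn z w n \<le> 0" using sub[OF that] by auto
    then show ?thesis by linarith
  qed
  have L: "min B (Min {}) \<le> Ln z w n \<and> Ln z w n \<le> max 0 (Min {})" if "n \<ge> 1" for n
  proof (cases "leaves z w n = {}")
    case True then show ?thesis by (simp add: Ln_def)
  next
    case False
    have f: "finite (leaves z w n)" using sub[OF that] finite_subset by blast
    have "Ln z w n \<in> leaves z w n" unfolding Ln_def using Min_in[OF f False] .
    then have "B \<le> Ln z w n \<and> Ln z w n \<le> 0" using sub[OF that] by auto
    then show ?thesis by linarith
  qed
  have C: "Lambdan z w n \<le> card {B..0}" if "n \<ge> 1" for n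
    unfolding Lambdan_def using card_mono[OF _ sub[OF that]] by simp
  have I: "ereal (real_of_int (min B (Min {}))) \<le> (INF n\<in>{1::int..}. ereal (real_of_int (Ln z w n)))"
    using L by (intro INF_greatest) auto
  have "(INF n\<in>{1::int..}. ereal (real_of_int (Ln z w n))) \<noteq> -\<infinity>"
  proof
    assume "(INF n\<in>{1::int..}. ereal (real_of_int (Ln z w n))) = -\<infinity>"
    with I show False by simp
  qed
  moreover have "bdd_above ((\<lambda>n. Rn z w n) ` {1..})" using R by (intro bdd_aboveI2[where M="max 0 (Max {})"]) auto
  moreover have "bdd_below ((\<lambda>n. Rn z w n) ` {1..})" using R by (intro bdd_belowI2[where m="min B (Max {})"]) auto
  moreover have "bdd_above ((\<lambda>n. Ln z w n) ` {1..})" using L by (intro bdd_aboveI2[where M="max 0 (Min {})"]) auto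
  moreover have "bdd_below ((\<lambda>n. Ln z w n) ` {1..})" using L by (intro bdd_belowI2[where m="min B (Min {})"]) auto
  moreover have "bdd_above ((\<lambda>n. Lambdan z w n) ` {1..})" using C by (intro bdd_aboveI2[where M="card {B..0}"]) auto
  ultimately show ?thesis by blast
qed

lemma det_bounds':
  assumes "\<exists>B\<le>0. (\<forall>m\<ge>1. B \<le> int m - int (z m)) \<and> (\<forall>m\<ge>1. B \<le> int m - int (w m))"
  shows "(INF n\<in>{1::int..}. ereal (real_of_int (Ln z w n))) \<noteq> -\<infinity>
       \<and> (bdd_above ((\<lambda>n. Rn z w n) ` {1..})
       \<and> bdd_below ((\<lambda>n. Rn z w n) ` {1..})
       \<and> bdd_above ((\<lambda>n. Ln z w n) ` {1..})
       \<and> bdd_below ((\<lambda>n. Ln z w n) ` {1..})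
       \<and> bdd_above ((\<lambda>n. Lambdan z w n) ` {1..}))"
proof -
  obtain B where "B \<le> 0" "\<forall>m\<ge>1. B \<le> int m - int (z m)" "\<forall>m\<ge>1. B \<le> int m - int (w m)"
    using assms by blast
  then show ?thesis by (intro det_bounds) auto
qed

theorem theorem1:
  fixes M :: "'a measure" and Z W :: "'a \<Rightarrow> nat" and Zs Ws :: "nat \<Rightarrow> 'a \<Rightarrow> nat"
  assumes "prob_space M"
    and indep: "prob_space.indep_vars M (\<lambda>_. count_space UNIV) (family Z W Zs Ws) UNIV"
    and ident: "\<And>i. distr M (count_space UNIV) (family Z W Zs Ws i) = distr M (count_space UNIV) Z"
    and pos: "\<And>i \<omega>. \<omega> \<in> space M \<Longrightarrow> family Z W Zs Ws i \<omega> \<ge> 1"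
    and finexp: "(\<integral>\<^sup>+ \<omega>. ennreal (real (Z \<omega>)) \<partial>M) < \<infinity>"
  shows "(AE \<omega> in M. (INF n\<in>{1::int..}. ereal (real_of_int (Ln (\<lambda>k. Zs k \<omega>) (\<lambda>k. Ws k \<omega>) n))) \<noteq> -\<infinity>)
       \<and> (AE \<omega> in M. bdd_above ((\<lambda>n. Rn (\<lambda>k. Zs k \<omega>) (\<lambda>k. Ws k \<omega>) n) ` {1..})
                   \<and> bdd_below ((\<lambda>n. Rn (\<lambda>k. Zs k \<omega>) (\<lambda>k. Ws k \<omega>) n) ` {1..})
                   \<and> bdd_above ((\<lambda>n. Ln (\<lambda>k. Zs k \<omega>) (\<lambda>k. Ws k \<omega>) n) ` {1..})
                   \<and> bdd_below ((\<lambda>n. Ln (\<lambda>k. Zs k \<omega>) (\<lambda>k. Ws k \<omega>) n) ` {1..})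
                   \<and> bdd_above ((\<lambda>n. Lambdan (\<lambda>k. Zs k \<omega>) (\<lambda>k. Ws k \<omega>) n) ` {1..}))"
proof -
  interpret P: prob_space M by fact
  define X where "X = family Z W Zs Ws"
  have meas: "\<And>i. X i \<in> measurable M (count_space UNIV)"
    using indep unfolding X_def P.indep_vars_def by auto
  have XZs: "\<And>n. n \<ge> 1 \<Longrightarrow> X (True,n) = Zs n" and XWs: "\<And>n. n \<ge> 1 \<Longrightarrow> X (False,n) = Ws n"
    and XZ: "X (True,0) = Z" by (auto simp: X_def family_def)
  have Zm: "Z \<in> measurable M (count_space UNIV)" using meas[of "(True,0)"] XZ by simp
  have setX: "{\<omega>\<in>space M. k < X i \<omega>} \<in> sets M" for i k
  proof -
    have "{\<omega>\<in>space M. k < X i \<omega>} = X i -` {k<..} \<inter> space M" by auto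
    then show ?thesis using measurable_sets[OF meas[of i], of "{k<..}"] by simp
  qed
  have setZ: "{\<omega>\<in>space M. k < Z \<omega>} \<in> sets M" for k
    using setX[of k "(True,0)"] XZ by simp
  have dist: "measure M {\<omega>\<in>space M. k < X i \<omega>} = measure M {\<omega>\<in>space M. k < Z \<omega>}" for i k
  proof -
    have e1: "{\<omega>\<in>space M. k < X i \<omega>} = X i -` {k<..} \<inter> space M" by auto
    have e2: "{\<omega>\<in>space M. k < Z \<omega>} = Z -` {k<..} \<inter> space M" by auto
    have "measure M {\<omega>\<in>space M. k < X i \<omega>} = measure (distr M (count_space UNIV) (X i)) {k<..}"
      using measure_distr[OF meas[of i], of "{k<..}"] e1 by simp
    also have "\<dots> = measure (distr M (count_space UNIV) Z) {k<..}" using ident X_def by simp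
    also have "\<dots> = measure M {\<omega>\<in>space M. k < Z \<omega>}"
      using measure_distr[OF Zm, of "{k<..}"] e2 by simp
    finally show ?thesis .
  qed
  have summ: "summable (\<lambda>k. measure M {\<omega>\<in>space M. k < Z \<omega>})"
  proof -
    have "(\<integral>\<^sup>+\<omega>. ennreal (real (Z \<omega>)) \<partial>M) = (\<integral>\<^sup>+\<omega>. (\<Sum>k. indicator {\<omega>\<in>space M. k < Z \<omega>} \<omega>) \<partial>M)"
    proof (rule nn_integral_cong)
      fix \<omega> assume om: "\<omega> \<in> space M"
      have "(\<Sum>k. indicator {\<omega>\<in>space M. k < Z \<omega>} \<omega> :: ennreal) = (\<Sum>k\<in>{..<Z \<omega>}. indicator {\<omega>\<in>space M. k < Z \<omega>} \<omega>)"
        by (rule suminf_finite) (auto simp: indicator_def)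
      also have "\<dots> = of_nat (Z \<omega>)" using om by (simp add: indicator_def)
      finally show "ennreal (real (Z \<omega>)) = (\<Sum>k. indicator {\<omega>\<in>space M. k < Z \<omega>} \<omega>)"
        by (simp add: ennreal_of_nat_eq_real_of_nat)
    qed
    also have "\<dots> = (\<Sum>k. emeasure M {\<omega>\<in>space M. k < Z \<omega>})"
      by (subst nn_integral_suminf) (auto simp: setZ intro!: borel_measurable_indicator)
    also have "\<dots> = (\<Sum>k. ennreal (measure M {\<omega>\<in>space M. k < Z \<omega>}))"
      by (simp add: P.emeasure_eq_measure)
    finally have "(\<Sum>k. ennreal (measure M {\<omega>\<in>space M. k < Z \<omega>})) \<noteq> top" using finexp by simp
    then show ?thesis by (intro summable_suminf_not_top) auto
  qed
  define A where "A n = {\<omega>\<in>space M. 1 \<le> n \<and> (n < Zs n \<omega> \<or> n < Ws n \<omega>)}" for n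
  have Aeq: "A n = (if 1 \<le> n then {\<omega>\<in>space M. n < X (True,n) \<omega>} \<union> {\<omega>\<in>space M. n < X (False,n) \<omega>} else {})" for n
    by (auto simp: A_def XZs XWs)
  have Asets: "A n \<in> sets M" for n
    unfolding Aeq using setX by auto
  have Ale: "measure M (A n) \<le> 2 * measure M {\<omega>\<in>space M. n < Z \<omega>}" for n
  proof (cases "1 \<le> n")
    case True
    have "measure M (A n) \<le> measure M {\<omega>\<in>space M. n < X (True,n) \<omega>} + measure M {\<omega>\<in>space M. n < X (False,n) \<omega>}"
      unfolding Aeq using True setX by (simp add: measure_subadditive P.emeasure_eq_measure)
    then show ?thesis using dist by simp
  next
    case False then show ?thesis by (simp add: Aeq)
  qed
  have Asum: "summable (\<lambda>n. measure M (A n))"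
    by (rule summable_comparison_test'[OF summable_mult[OF summ, of 2], of 0]) (simp add: Ale)
  have BC: "AE \<omega> in M. eventually (\<lambda>n. \<omega> \<in> space M - A n) sequentially"
    by (rule borel_cantelli_AE1) (auto simp: Asets Asum P.emeasure_eq_measure)
  have key: "AE \<omega> in M. \<exists>B\<le>0. (\<forall>m\<ge>1. B \<le> int m - int (Zs m \<omega>)) \<and> (\<forall>m\<ge>1. B \<le> int m - int (Ws m \<omega>))"
    using BC
  proof eventually_elim
    case (elim \<omega>)
    then obtain N where N: "\<And>n. n \<ge> N \<Longrightarrow> \<omega> \<in> space M - A n" by (auto simp: eventually_sequentially)
    define B where "B = - int (\<Sum>m<N. Zs m \<omega> + Ws m \<omega>)"
    have le: "Zs m \<omega> + Ws m \<omega> \<le> (\<Sum>m<N. Zs m \<omega> + Ws m \<omega>)" if "m < N" for m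
      using member_le_sum[of m "{..<N}" "\<lambda>m. Zs m \<omega> + Ws m \<omega>"] that by simp
    have big: "Zs m \<omega> \<le> m \<and> Ws m \<omega> \<le> m" if "m \<ge> N" "m \<ge> 1" for m
      using N[OF that(1)] that(2) by (auto simp: A_def)
    have "B \<le> 0" unfolding B_def by (simp only: neg_le_0_iff_le of_nat_0_le_iff)
    moreover have "B \<le> int m - int (Zs m \<omega>) \<and> B \<le> int m - int (Ws m \<omega>)" if "m \<ge> 1" for m
    proof (cases "m < N")
      case True then show ?thesis using le[OF True] unfolding B_def by linarith
    next
      case False
      then have "Zs m \<omega> \<le> m \<and> Ws m \<omega> \<le> m" using big[of m] that by simp
      moreover have "B \<le> 0" unfolding B_def by (simp only: neg_le_0_iff_le of_nat_0_le_iff)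
      ultimately show ?thesis by linarith
    qed
    ultimately show ?case by blast
  qed
  show ?thesis
  proof
    show "AE \<omega> in M. (INF n\<in>{1::int..}. ereal (real_of_int (Ln (\<lambda>k. Zs k \<omega>) (\<lambda>k. Ws k \<omega>) n))) \<noteq> -\<infinity>"
      using key by (rule eventually_mono) (rule det_bounds'[THEN conjunct1])
    show "AE \<omega> in M. bdd_above ((\<lambda>n. Rn (\<lambda>k. Zs k \<omega>) (\<lambda>k. Ws k \<omega>) n) ` {1..})
                   \<and> bdd_below ((\<lambda>n. Rn (\<lambda>k. Zs k \<omega>) (\<lambda>k. Ws k \<omega>) n) ` {1..})
                   \<and> bdd_above ((\<lambda>n. Ln (\<lambda>k. Zs k \<omega>) (\<lambda>k. Ws k \<omega>) n) ` {1..})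
                   \<and> bdd_below ((\<lambda>n. Ln (\<lambda>k. Zs k \<omega>) (\<lambda>k. Ws k \<omega>) n) ` {1..})
                   \<and> bdd_above ((\<lambda>n. Lambdan (\<lambda>k. Zs k \<omega>) (\<lambda>k. Ws k \<omega>) n) ` {1..})"
      using key by (rule eventually_mono) (rule det_bounds'[THEN conjunct2])
  qed
qed

end
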